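(* Let $X$ be a Hausdorff space and $A\in\mathcal{F}(X)$. The following are equivalent: (a) $A$ is a weak $P$-point in $\mathcal{F}(X)$; (b) $A$ is a weak $P$-point in $\mathcal{F}_n(X)$ for each positive integer $n\geq|A|$; (c) every $x\in A$ is a weak $P$-point of $X$.
   Context: $\mathcal{F}(X)$ is the set of nonempty finite subsets of $X$ and $\mathcal{F}_n(X)$ the set of nonempty subsets with at most $n$ points, with the Vietoris topology (generated by $U^+=\{A: A\subset U\}$ and $U^-=\{A: A\cap U\neq\emptyset\}$ for $U$ open in $X$). A point $p$ of a space $Z$ is a weak $P$-point if $p\notin\overline{N}$ for every countable $N\subset Z-\{p\}$. *)

theory Defs
  imports "HOL-Analysis.Analysis"
begin

definition fin_subsets :: "'a topology \<Rightarrow> 'a set set" where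
  "fin_subsets X = {A. A \<subseteq> topspace X \<and> finite A \<and> A \<noteq> {}}"

definition fin_subsets_le :: "'a topology \<Rightarrow> nat \<Rightarrow> 'a set set" where
  "fin_subsets_le X n = {A \<in> fin_subsets X. card A \<le> n}"

definition vietoris_on :: "'a topology \<Rightarrow> 'a set set \<Rightarrow> 'a set topology" where
  "vietoris_on X S = topology_generated_by
     ({{A \<in> S. A \<subseteq> U} | U. openin X U} \<union> {{A \<in> S. A \<inter> U \<noteq> {}} | U. openin X U})"

definition hyper_F :: "'a topology \<Rightarrow> 'a set topology" where
  "hyper_F X = vietoris_on X (fin_subsets X)"

definition hyper_Fn :: "'a topology \<Rightarrow> nat \<Rightarrow> 'a set topology" where
  "hyper_Fn X n = vietoris_on X (fin_subsets_le X n)"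

definition weak_P_point :: "'b topology \<Rightarrow> 'b \<Rightarrow> bool" where
  "weak_P_point Z p \<longleftrightarrow> p \<in> topspace Z \<and>
     (\<forall>N. countable N \<and> N \<subseteq> topspace Z - {p} \<longrightarrow> p \<notin> Z closure_of N)"

end

theory Submission
  imports Defs
begin



lemma vtop: "S \<subseteq> fin_subsets X \<Longrightarrow> topspace (vietoris_on X S) = S"
proof -
  assume S: "S \<subseteq> fin_subsets X"
  have 1: "{A \<in> S. A \<subseteq> topspace X} \<in> {{A \<in> S. A \<subseteq> U} |U. openin X U}"
    using openin_topspace[of X] by blast
  have fs: "\<And>B. B \<in> fin_subsets X \<Longrightarrow> B \<subseteq> topspace X" unfolding fin_subsets_def by simp
  have 2: "{A \<in> S. A \<subseteq> topspace X} = S"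
  proof
    show "S \<subseteq> {A \<in> S. A \<subseteq> topspace X}"
    proof
      fix B assume "B \<in> S"
      thus "B \<in> {A \<in> S. A \<subseteq> topspace X}" using S fs by auto
    qed
  qed auto
  show ?thesis unfolding vietoris_on_def topology_generated_by_topspace
  proof
    show "\<Union> ({{A \<in> S. A \<subseteq> U} |U. openin X U} \<union> {{A \<in> S. A \<inter> U \<noteq> {}} |U. openin X U}) \<subseteq> S"
      by auto
    show "S \<subseteq> \<Union> ({{A \<in> S. A \<subseteq> U} |U. openin X U} \<union> {{A \<in> S. A \<inter> U \<noteq> {}} |U. openin X U})"
      using 1 2 by (metis (no_types, lifting) Sup_upper UnI1)
  qed
qed

lemma c_to_a:
  assumes S: "S \<subseteq> fin_subsets X" and AS: "A \<in> S" and wp: "\<forall>x\<in>A. weak_P_point X x"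
  shows "weak_P_point (vietoris_on X S) A"
  unfolding weak_P_point_def
proof (intro conjI allI impI)
  show "A \<in> topspace (vietoris_on X S)" using vtop[OF S] AS by simp
  fix N assume "countable N \<and> N \<subseteq> topspace (vietoris_on X S) - {A}"
  hence cN: "countable N" and NS: "N \<subseteq> S - {A}" using vtop[OF S] by auto
  define C where "C = \<Union>N"
  have fin: "\<And>B. B \<in> S \<Longrightarrow> finite B \<and> B \<subseteq> topspace X \<and> B \<noteq> {}" using S unfolding fin_subsets_def by auto
  have "countable (\<Union>B\<in>N. B)"
    using cN NS fin by (intro countable_UN) (auto intro: countable_finite)
  hence cC: "countable C" unfolding C_def by simp
  have CX: "C \<subseteq> topspace X" using NS fin unfolding C_def by blast
  have "\<forall>a\<in>A. \<exists>V. openin X V \<and> a \<in> V \<and> V \<inter> C \<subseteq> {a}"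
  proof
    fix a assume aA: "a \<in> A"
    have wa: "weak_P_point X a" using wp aA by blast
    have c1: "countable (C - {a})" using cC by simp
    have c2: "C - {a} \<subseteq> topspace X - {a}" using CX by blast
    have ncl: "a \<notin> X closure_of (C - {a})" using wa c1 c2 unfolding weak_P_point_def by blast
    have aX: "a \<in> topspace X" using wa unfolding weak_P_point_def by blast
    have "\<not> (\<forall>T. a \<in> T \<and> openin X T \<longrightarrow> (\<exists>y. y \<in> C - {a} \<and> y \<in> T))"
      using ncl aX unfolding in_closure_of by simp
    then obtain T where "a \<in> T" "openin X T" "\<forall>y. y \<in> C - {a} \<longrightarrow> y \<notin> T"
      by blast
    thus "\<exists>V. openin X V \<and> a \<in> V \<and> V \<inter> C \<subseteq> {a}" by blast
  qed
  then have "\<exists>V. \<forall>a\<in>A. openin X (V a) \<and> a \<in> V a \<and> V a \<inter> C \<subseteq> {a}" by (rule bchoice)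
  then obtain V where V0: "\<forall>a\<in>A. openin X (V a) \<and> a \<in> V a \<and> V a \<inter> C \<subseteq> {a}" by (elim exE)
  have V: "\<And>a. a \<in> A \<Longrightarrow> openin X (V a) \<and> a \<in> V a \<and> V a \<inter> C \<subseteq> {a}" using V0 by simp
  define W where "W = {B \<in> S. B \<subseteq> \<Union>(V ` A)} \<inter> \<Inter> ((\<lambda>a. {B \<in> S. B \<inter> V a \<noteq> {}}) ` A)"
  have Aft: "finite A" "A \<noteq> {}" using fin AS by auto
  have oU: "openin X (\<Union>(V ` A))" using V by (intro openin_Union) blast
  have W1: "openin (vietoris_on X S) {B \<in> S. B \<subseteq> \<Union>(V ` A)}"
    unfolding vietoris_on_def
    apply (rule topology_generated_by_Basis)
    apply (rule UnI1)
    using oU by blast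
  have W2: "openin (vietoris_on X S) (\<Inter> ((\<lambda>a. {B \<in> S. B \<inter> V a \<noteq> {}}) ` A))"
  proof (rule openin_Inter)
    show "finite ((\<lambda>a. {B \<in> S. B \<inter> V a \<noteq> {}}) ` A)" using Aft by simp
    show "(\<lambda>a. {B \<in> S. B \<inter> V a \<noteq> {}}) ` A \<noteq> {}" using Aft by simp
    fix T assume "T \<in> (\<lambda>a. {B \<in> S. B \<inter> V a \<noteq> {}}) ` A"
    then obtain a where aA: "a \<in> A" and T: "T = {B \<in> S. B \<inter> V a \<noteq> {}}" by blast
    have "T \<in> {{A \<in> S. A \<inter> U \<noteq> {}} | U. openin X U}" using T V[OF aA] by blast
    thus "openin (vietoris_on X S) T" unfolding vietoris_on_def
      by (intro topology_generated_by_Basis UnI2)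
  qed
  have Wo: "openin (vietoris_on X S) W" unfolding W_def using W1 W2 by blast
  have AW: "A \<in> W" unfolding W_def using AS V by auto
  have "W \<inter> N = {}"
  proof (rule ccontr)
    assume "W \<inter> N \<noteq> {}"
    then obtain B where BW: "B \<in> W" and BN: "B \<in> N" by blast
    have BC: "B \<subseteq> C" using BN unfolding C_def by blast
    have "B \<subseteq> A"
    proof
      fix b assume "b \<in> B"
      then obtain a where "a \<in> A" "b \<in> V a" using BW unfolding W_def by blast
      thus "b \<in> A" using V[of a] BC \<open>b \<in> B\<close> by blast
    qed
    moreover have "A \<subseteq> B"
    proof
      fix a assume aA: "a \<in> A"
      then obtain b where "b \<in> B" "b \<in> V a" using BW unfolding W_def by blast
      thus "a \<in> B" using V[OF aA] BC by blast
    qed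
    ultimately show False using BN NS by blast
  qed
  hence "\<not> (\<exists>y. y \<in> N \<and> y \<in> W)" by blast
  thus "A \<notin> vietoris_on X S closure_of N"
    unfolding in_closure_of using Wo AW by blast
qed



lemma gen_ind:
  assumes g: "generate_topology_on
     ({{A \<in> S. A \<subseteq> U} | U. openin X U} \<union> {{A \<in> S. A \<inter> U \<noteq> {}} | U. openin X U}) W"
    and rep: "\<And>m. m \<in> topspace X \<Longrightarrow> (A - {x}) \<union> {m} \<in> S" and xA: "x \<in> A" and xX: "x \<in> topspace X"
  shows "A \<in> W \<longrightarrow> (\<exists>Ob. openin X Ob \<and> x \<in> Ob \<and> (\<forall>m\<in>Ob. (A - {x}) \<union> {m} \<in> W))"
  using g
proof induct
  case Empty then show ?case by simp
next
  case (Int a b)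
  show ?case
  proof
    assume "A \<in> a \<inter> b"
    then obtain O1 O2 where "openin X O1 \<and> x \<in> O1 \<and> (\<forall>m\<in>O1. (A - {x}) \<union> {m} \<in> a)"
      "openin X O2 \<and> x \<in> O2 \<and> (\<forall>m\<in>O2. (A - {x}) \<union> {m} \<in> b)" using Int by auto
    thus "\<exists>Ob. openin X Ob \<and> x \<in> Ob \<and> (\<forall>m\<in>Ob. (A - {x}) \<union> {m} \<in> a \<inter> b)"
      by (intro exI[of _ "O1 \<inter> O2"]) auto
  qed
next
  case (UN K)
  show ?case
  proof
    assume "A \<in> \<Union>K"
    then obtain k where "k \<in> K" "A \<in> k" by blast
    then obtain Ob where "openin X Ob \<and> x \<in> Ob \<and> (\<forall>m\<in>Ob. (A - {x}) \<union> {m} \<in> k)" using UN by blast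
    thus "\<exists>Ob. openin X Ob \<and> x \<in> Ob \<and> (\<forall>m\<in>Ob. (A - {x}) \<union> {m} \<in> \<Union>K)"
      using \<open>k \<in> K\<close> by blast
  qed
next
  case (Basis s)
  show ?case
  proof
    assume As: "A \<in> s"
    from Basis show "\<exists>Ob. openin X Ob \<and> x \<in> Ob \<and> (\<forall>m\<in>Ob. (A - {x}) \<union> {m} \<in> s)"
    proof
      assume "s \<in> {{A \<in> S. A \<subseteq> U} | U. openin X U}"
      then obtain U where U: "openin X U" "s = {A \<in> S. A \<subseteq> U}" by blast
      show ?thesis
        apply (rule exI[of _ U])
        using U As xA rep openin_subset[OF U(1)] by auto
    next
      assume "s \<in> {{A \<in> S. A \<inter> U \<noteq> {}} | U. openin X U}"
      then obtain U where U: "openin X U" "s = {A \<in> S. A \<inter> U \<noteq> {}}" by blast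
      show ?thesis
      proof (cases "x \<in> U")
        case True
        show ?thesis
          apply (rule exI[of _ U])
          using U As xA rep openin_subset[OF U(1)] True by auto
      next
        case False
        show ?thesis
          apply (rule exI[of _ "topspace X"])
          using U As xA rep False xX by auto
      qed
    qed
  qed
qed

lemma not_c_not_a:
  assumes S: "S \<subseteq> fin_subsets X" and AS: "A \<in> S" and xA: "x \<in> A"
    and rep: "\<And>m. m \<in> topspace X \<Longrightarrow> (A - {x}) \<union> {m} \<in> S"
    and nw: "\<not> weak_P_point X x"
  shows "\<not> weak_P_point (vietoris_on X S) A"
proof -
  have xX: "x \<in> topspace X" using S AS xA unfolding fin_subsets_def by auto
  then obtain M where M: "countable M" "M \<subseteq> topspace X - {x}" "x \<in> X closure_of M"
    using nw unfolding weak_P_point_def by blast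
  define N where "N = (\<lambda>m. (A - {x}) \<union> {m}) ` M"
  have cN: "countable N" unfolding N_def using M by simp
  have NS: "N \<subseteq> topspace (vietoris_on X S) - {A}"
  proof
    fix B assume "B \<in> N"
    then obtain m where m: "m \<in> M" "B = (A - {x}) \<union> {m}" unfolding N_def by blast
    have "m \<noteq> x" "m \<in> topspace X" using m M by auto
    hence "x \<notin> B" using m by auto
    thus "B \<in> topspace (vietoris_on X S) - {A}"
      unfolding vtop[OF S] using m rep[OF \<open>m \<in> topspace X\<close>] xA by auto
  qed
  have "A \<in> vietoris_on X S closure_of N"
    unfolding in_closure_of
  proof (intro conjI allI impI)
    show "A \<in> topspace (vietoris_on X S)" using vtop[OF S] AS by simp
    fix W assume "A \<in> W \<and> openin (vietoris_on X S) W"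
    then obtain Ob where Ob: "openin X Ob" "x \<in> Ob" "\<forall>m\<in>Ob. (A - {x}) \<union> {m} \<in> W"
      using gen_ind[OF _ rep xA xX, of W] unfolding vietoris_on_def openin_topology_generated_by_iff
      by blast
    then obtain m where "m \<in> M" "m \<in> Ob" using M(3) unfolding in_closure_of by blast
    thus "\<exists>y. y \<in> N \<and> y \<in> W" using Ob unfolding N_def by blast
  qed
  thus ?thesis using cN NS unfolding weak_P_point_def by blast
qed



lemma rep_F:
  assumes "A \<in> fin_subsets X" "m \<in> topspace X"
  shows "(A - {x}) \<union> {m} \<in> fin_subsets X"
  using assms unfolding fin_subsets_def by auto

lemma card_rep:
  assumes "finite A" "x \<in> A"
  shows "card ((A - {x}) \<union> {m}) \<le> card A"
proof -
  have "card ((A - {x}) \<union> {m}) = card (insert m (A - {x}))" by simp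
  also have "\<dots> \<le> Suc (card (A - {x}))" by (rule card_insert_le_m1) simp_all
  also have "\<dots> = card A" using assms card_Suc_Diff1 by metis
  finally show ?thesis .
qed

theorem proposition4p3:
  fixes X :: "'a topology" and A :: "'a set"
  assumes "Hausdorff_space X" and "A \<in> fin_subsets X"
  shows "(weak_P_point (hyper_F X) A
            \<longleftrightarrow> (\<forall>n::nat. 0 < n \<and> card A \<le> n \<longrightarrow> weak_P_point (hyper_Fn X n) A))
       \<and> ((\<forall>n::nat. 0 < n \<and> card A \<le> n \<longrightarrow> weak_P_point (hyper_Fn X n) A)
            \<longleftrightarrow> (\<forall>x\<in>A. weak_P_point X x))"
proof -
  have AF: "A \<in> fin_subsets X" by fact
  have finA: "finite A" "A \<noteq> {}" using AF unfolding fin_subsets_def by auto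
  have Fn_sub: "\<And>n. fin_subsets_le X n \<subseteq> fin_subsets X" unfolding fin_subsets_le_def by auto
  have AFn: "\<And>n. card A \<le> n \<Longrightarrow> A \<in> fin_subsets_le X n"
    using AF unfolding fin_subsets_le_def by auto
  have repFn: "\<And>n x m. card A \<le> n \<Longrightarrow> x \<in> A \<Longrightarrow> m \<in> topspace X \<Longrightarrow>
      (A - {x}) \<union> {m} \<in> fin_subsets_le X n"
    unfolding fin_subsets_le_def using rep_F[OF AF] card_rep[OF finA(1)] le_trans by blast
  have c_a: "(\<forall>x\<in>A. weak_P_point X x) \<Longrightarrow> weak_P_point (hyper_F X) A"
    unfolding hyper_F_def by (rule c_to_a[OF order_refl AF])
  have c_b: "(\<forall>x\<in>A. weak_P_point X x) \<Longrightarrow>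
      (\<forall>n::nat. 0 < n \<and> card A \<le> n \<longrightarrow> weak_P_point (hyper_Fn X n) A)"
    unfolding hyper_Fn_def using c_to_a[OF Fn_sub AFn] by blast
  have a_c: "weak_P_point (hyper_F X) A \<Longrightarrow> (\<forall>x\<in>A. weak_P_point X x)"
    unfolding hyper_F_def using not_c_not_a[OF order_refl AF _ rep_F[OF AF]] by blast
  have b_c: "(\<forall>n::nat. 0 < n \<and> card A \<le> n \<longrightarrow> weak_P_point (hyper_Fn X n) A) \<Longrightarrow>
      (\<forall>x\<in>A. weak_P_point X x)"
  proof -
    assume H: "\<forall>n::nat. 0 < n \<and> card A \<le> n \<longrightarrow> weak_P_point (hyper_Fn X n) A"
    have "0 < card A" using finA by (simp add: card_gt_0_iff)
    hence W: "weak_P_point (vietoris_on X (fin_subsets_le X (card A))) A"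
      using H unfolding hyper_Fn_def by blast
    show "\<forall>x\<in>A. weak_P_point X x"
    proof (rule ccontr)
      assume "\<not> (\<forall>x\<in>A. weak_P_point X x)"
      then obtain x where "x \<in> A" "\<not> weak_P_point X x" by blast
      thus False using not_c_not_a[OF Fn_sub AFn[OF order_refl] \<open>x \<in> A\<close> repFn[OF order_refl \<open>x \<in> A\<close>]] W
        by blast
    qed
  qed
  show ?thesis using c_a c_b a_c b_c by blast
qed



end
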